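(* Let $\alpha>3$ be an integer, and let $u\in\mathcal{D}(A^{\alpha/2})$, $v\in\mathcal{D}(A^{(\alpha+1)/2})$, $w\in\mathcal{D}(A^{\alpha})$. Then $$|(B(u,v),A^\alpha w)|\le 2^\alpha c_A\Big(|u|^{1/2}|Au|^{1/2}|A^{\frac{1+\alpha}{2}}v|+|A^{\alpha/2}u|\,|A^{1/2}v|^{1/2}|A^{3/2}v|^{1/2}\Big)|A^{\alpha/2}w|.$$
   Context: $H$ is the closure in $L^2([0,L]^2)^2$ of the $\mathbb{R}^2$-valued $[0,L]^2$-periodic trigonometric polynomials $v$ with $\nabla\cdot v=0$ and zero mean, with $L^2$ inner product $(\cdot,\cdot)$ and norm $|\cdot|$; $A=-\Delta$ is the Stokes operator with spectrally defined powers and domains $\mathcal{D}(A^\sigma)$; $B(u,v)=\mathcal{P}((u\cdot\nabla)v)$ with $\mathcal{P}$ the Leray projection. $c_A$ is an absolute constant for which the Agmon inequality $|u|_{L^\infty}\le c_A|u|^{1/2}|Au|^{1/2}$ holds for periodic mean-zero functions $u$ in the domain of $A=-\Delta$. *)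

theory Defs
  imports "HOL-Analysis.Analysis"
begin

text \<open>
Fourier representation on the torus [0,L]^2. A (possibly complex) periodic
R^2-valued field f is represented by its Fourier coefficients
c :: int*int => complex*complex, f(x) = sum_k c k * exp(2 pi i k.x / L).
\<close>

type_synonym coef = "int \<times> int \<Rightarrow> complex \<times> complex"

definition lam :: "real \<Rightarrow> int \<times> int \<Rightarrow> real" where
  "lam L k = (2 * pi / L)^2 * (real_of_int (fst k)^2 + real_of_int (snd k)^2)"

text \<open>Spectral powers of the Stokes operator A = -Delta.\<close>
definition Apow :: "real \<Rightarrow> real \<Rightarrow> coef \<Rightarrow> coef" where
  "Apow L s c = (\<lambda>k. (lam L k powr s) *\<^sub>R c k)"

definition sq_summable :: "coef \<Rightarrow> bool" where
  "sq_summable c \<longleftrightarrow> (\<lambda>k. (norm (c k))^2) summable_on UNIV"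

text \<open>L^2([0,L]^2) norm (Parseval; |e_k|_{L^2}^2 = L^2).\<close>
definition hnorm :: "real \<Rightarrow> coef \<Rightarrow> real" where
  "hnorm L c = sqrt (L^2 * infsum (\<lambda>k. (norm (c k))^2) UNIV)"

text \<open>L^2 inner product (f,g) = integral of f.conj g over [0,L]^2.\<close>
definition l2inner :: "real \<Rightarrow> coef \<Rightarrow> coef \<Rightarrow> complex" where
  "l2inner L f g = complex_of_real (L^2) *
     infsum (\<lambda>k. fst (f k) * cnj (fst (g k)) + snd (f k) * cnj (snd (g k))) UNIV"

definition real_valued :: "coef \<Rightarrow> bool" where
  "real_valued c \<longleftrightarrow> (\<forall>a b. c (-a, -b) = (cnj (fst (c (a, b))), cnj (snd (c (a, b)))))"

text \<open>Membership in H: L^2, zero mean, divergence free, real valued.\<close>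
definition inH :: "coef \<Rightarrow> bool" where
  "inH c \<longleftrightarrow> sq_summable c \<and> c (0, 0) = (0, 0) \<and> real_valued c \<and>
     (\<forall>k. of_int (fst k) * fst (c k) + of_int (snd k) * snd (c k) = 0)"

definition inDom :: "real \<Rightarrow> real \<Rightarrow> coef \<Rightarrow> bool" where
  "inDom L s c \<longleftrightarrow> inH c \<and> sq_summable (Apow L s c)"

definition ef :: "real \<Rightarrow> int \<times> int \<Rightarrow> real \<times> real \<Rightarrow> complex" where
  "ef L k x = exp (2 * pi * \<i> * complex_of_real
       ((real_of_int (fst k) * fst x + real_of_int (snd k) * snd x) / L))"

definition feval :: "real \<Rightarrow> coef \<Rightarrow> real \<times> real \<Rightarrow> complex \<times> complex" where
  "feval L c x = (infsum (\<lambda>k. ef L k x * fst (c k)) UNIV,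
                  infsum (\<lambda>k. ef L k x * snd (c k)) UNIV)"

definition agmon_const :: "real \<Rightarrow> real \<Rightarrow> bool" where
  "agmon_const L cA \<longleftrightarrow>
     (\<forall>c. c (0, 0) = (0, 0) \<and> real_valued c \<and> sq_summable c \<and> sq_summable (Apow L 1 c) \<longrightarrow>
        (\<forall>x. norm (feval L c x) \<le> cA * sqrt (hnorm L c) * sqrt (hnorm L (Apow L 1 c))))"

text \<open>Fourier coefficients of (u.grad) v:
  sum over j + l = k of (sum_m u_m(j) * (2 pi i l_m / L)) * v(l).\<close>
definition advect :: "real \<Rightarrow> coef \<Rightarrow> coef \<Rightarrow> coef" where
  "advect L u v k =
    (let a = (\<lambda>j. let l = (fst k - fst j, snd k - snd j) in
               (fst (u j) * (2 * pi * \<i> * of_int (fst l) / L)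
                + snd (u j) * (2 * pi * \<i> * of_int (snd l) / L), v l))
     in (infsum (\<lambda>j. fst (a j) * fst (snd (a j))) UNIV,
         infsum (\<lambda>j. fst (a j) * snd (snd (a j))) UNIV))"

definition leray :: "coef \<Rightarrow> coef" where
  "leray f k = (if k = (0, 0) then (0, 0) else
     (let p = (of_int (fst k) * fst (f k) + of_int (snd k) * snd (f k))
              / of_int ((fst k)^2 + (snd k)^2)
      in (fst (f k) - p * of_int (fst k), snd (f k) - p * of_int (snd k))))"

definition Bop :: "real \<Rightarrow> coef \<Rightarrow> coef \<Rightarrow> coef" where
  "Bop L u v = leray (advect L u v)"

end

theory Submission
  imports Defs
begin


lemma infsum_finite_sum_swap:
  fixes h :: "'k \<Rightarrow> 'a \<Rightarrow> real"
  assumes "finite K" "\<And>k. k \<in> K \<Longrightarrow> h k summable_on A"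
  shows "(\<lambda>j. \<Sum>k\<in>K. h k j) summable_on A \<and> (\<Sum>k\<in>K. infsum (h k) A) = infsum (\<lambda>j. \<Sum>k\<in>K. h k j) A"
  using assms
proof (induction K rule: finite_induct)
  case empty then show ?case by simp
next
  case (insert x F)
  then have s1: "(\<lambda>j. \<Sum>k\<in>F. h k j) summable_on A" and e1: "(\<Sum>k\<in>F. infsum (h k) A) = infsum (\<lambda>j. \<Sum>k\<in>F. h k j) A"
    by auto
  have s2: "h x summable_on A" using insert by auto
  show ?case using insert(1,2) s1 e1 s2
    by (simp add: summable_on_add infsum_add)
qed

lemma single_le_infsum:
  fixes f :: "'a \<Rightarrow> real"
  assumes "f summable_on UNIV" "\<And>x. f x \<ge> 0"
  shows "f x \<le> infsum f UNIV"
  using finite_sum_le_infsum[of f UNIV "{x}"] assms by auto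

lemma l2_pointwise:
  fixes g :: "'a \<Rightarrow> real"
  assumes "(\<lambda>x. (g x)^2) summable_on UNIV" "\<And>x. g x \<ge> 0"
  shows "g x \<le> sqrt (infsum (\<lambda>x. (g x)^2) UNIV)"
proof -
  have "(g x)^2 \<le> infsum (\<lambda>x. (g x)^2) UNIV"
    by (rule single_le_infsum) (use assms in auto)
  then show ?thesis using assms(2)[of x] real_le_rsqrt by blast
qed

lemma shift_bij: "bij_betw (\<lambda>j. (k::'a::ab_group_add) - j) UNIV UNIV"
  by (rule bij_betwI[where g="\<lambda>j. k - j"]) auto

lemma shift_bij2: "bij_betw (\<lambda>j. j - (k::'a::ab_group_add)) UNIV UNIV"
  by (rule bij_betwI[where g="\<lambda>j. j + k"]) auto

lemma conv_summable:
  fixes f g :: "'a::ab_group_add \<Rightarrow> real"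
  assumes "f summable_on UNIV" "\<And>x. f x \<ge> 0" "\<And>x. g x \<ge> 0" "\<And>x. g x \<le> C"
  shows "(\<lambda>j. f j * g (k - j)) summable_on UNIV"
proof (rule summable_on_comparison_test[where f="\<lambda>j. f j * C"])
  show "(\<lambda>j. f j * C) summable_on UNIV" using assms(1) by (rule summable_on_cmult_left)
  show "f j * g (k - j) \<le> f j * C" for j using assms by (simp add: mult_left_mono)
  show "0 \<le> f j * g (k - j)" for j using assms by simp
qed

lemma conv_swap:
  fixes f g :: "'a::ab_group_add \<Rightarrow> real"
  shows "infsum (\<lambda>j. f j * g (k - j)) UNIV = infsum (\<lambda>j. g j * f (k - j)) UNIV"
proof -
  have "infsum (\<lambda>j. (\<lambda>j. f j * g (k - j)) (k - j)) UNIV = infsum (\<lambda>j. f j * g (k - j)) UNIV"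
    by (rule infsum_reindex_bij_betw[OF shift_bij])
  then show ?thesis by (simp add: mult.commute)
qed

lemma conv_summable2:
  fixes f g :: "'a::ab_group_add \<Rightarrow> real"
  assumes "g summable_on UNIV" "\<And>x. f x \<ge> 0" "\<And>x. g x \<ge> 0" "\<And>x. f x \<le> C"
  shows "(\<lambda>j. f j * g (k - j)) summable_on UNIV"
proof -
  have "(\<lambda>j. g j * f (k - j)) summable_on UNIV" by (rule conv_summable) (use assms in auto)
  then have "(\<lambda>j. (\<lambda>j. g j * f (k - j)) (k - j)) summable_on UNIV"
    by (rule summable_on_reindex_bij_betw[OF shift_bij[of k], THEN iffD2])
  then show ?thesis by (simp add: mult.commute)
qed

lemma young_fin:
  fixes f g W :: "'a::ab_group_add \<Rightarrow> real"
  assumes fs: "f summable_on UNIV" and gs: "(\<lambda>x. (g x)^2) summable_on UNIV"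
    and Ws: "(\<lambda>x. (W x)^2) summable_on UNIV"
    and f0: "\<And>x. f x \<ge> 0" and g0: "\<And>x. g x \<ge> 0" and W0: "\<And>x. W x \<ge> 0"
    and K: "finite K"
  shows "(\<Sum>k\<in>K. W k * infsum (\<lambda>j. f j * g (k - j)) UNIV)
     \<le> infsum f UNIV * (sqrt (infsum (\<lambda>x. (g x)^2) UNIV) * sqrt (infsum (\<lambda>x. (W x)^2) UNIV))"
proof -
  define C where "C = sqrt (infsum (\<lambda>x. (g x)^2) UNIV) * sqrt (infsum (\<lambda>x. (W x)^2) UNIV)"
  have gC: "g x \<le> sqrt (infsum (\<lambda>x. (g x)^2) UNIV)" for x by (rule l2_pointwise) (use gs g0 in auto)
  have cs: "(\<lambda>j. f j * g (k - j)) summable_on UNIV" for k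
    by (rule conv_summable[OF fs f0 g0 gC])
  have hs: "(\<lambda>j. W k * (f j * g (k - j))) summable_on UNIV" for k
    using cs by (rule summable_on_cmult_right)
  have "(\<Sum>k\<in>K. W k * infsum (\<lambda>j. f j * g (k - j)) UNIV)
      = (\<Sum>k\<in>K. infsum (\<lambda>j. W k * (f j * g (k - j))) UNIV)"
    by (simp add: infsum_cmult_right')
  also have "\<dots> = infsum (\<lambda>j. \<Sum>k\<in>K. W k * (f j * g (k - j))) UNIV"
    using infsum_finite_sum_swap[OF K, of "\<lambda>k j. W k * (f j * g (k - j))" UNIV] hs by simp
  also have "\<dots> \<le> infsum (\<lambda>j. f j * C) UNIV"
  proof (rule infsum_mono)
    show "(\<lambda>j. \<Sum>k\<in>K. W k * (f j * g (k - j))) summable_on UNIV"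
      using infsum_finite_sum_swap[OF K, of "\<lambda>k j. W k * (f j * g (k - j))" UNIV] hs by simp
    show "(\<lambda>j. f j * C) summable_on UNIV" using fs by (rule summable_on_cmult_left)
    fix j
    have "(\<Sum>k\<in>K. W k * g (k - j)) \<le> C"
    proof -
      have a: "(\<Sum>k\<in>K. W k * g (k - j))^2 \<le> (\<Sum>k\<in>K. (W k)^2) * (\<Sum>k\<in>K. (g (k - j))^2)"
        by (rule Cauchy_Schwarz_ineq_sum)
      have b: "(\<Sum>k\<in>K. (W k)^2) \<le> infsum (\<lambda>x. (W x)^2) UNIV"
        by (rule finite_sum_le_infsum) (use Ws K in auto)
      have c1: "(\<Sum>k\<in>K. (g (k - j))^2) = (\<Sum>l\<in>(\<lambda>k. k - j) ` K. (g l)^2)"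
        by (subst sum.reindex) (auto simp: inj_on_def)
      have c2: "(\<Sum>l\<in>(\<lambda>k. k - j) ` K. (g l)^2) \<le> infsum (\<lambda>x. (g x)^2) UNIV"
        by (rule finite_sum_le_infsum) (use gs K in auto)
      have d: "(\<Sum>k\<in>K. (W k)^2) * (\<Sum>k\<in>K. (g (k - j))^2) \<le> infsum (\<lambda>x. (W x)^2) UNIV * infsum (\<lambda>x. (g x)^2) UNIV"
        apply (rule mult_mono)
        using b c1 c2 by (auto intro!: sum_nonneg infsum_nonneg)
      have "(\<Sum>k\<in>K. W k * g (k - j)) \<le> sqrt (infsum (\<lambda>x. (W x)^2) UNIV * infsum (\<lambda>x. (g x)^2) UNIV)"
        apply (rule real_le_rsqrt) using a d by linarith
      then show ?thesis unfolding C_def real_sqrt_mult by (simp add: mult.commute)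
    qed
    then have "f j * (\<Sum>k\<in>K. W k * g (k - j)) \<le> f j * C" using f0 by (simp add: mult_left_mono)
    then show "(\<Sum>k\<in>K. W k * (f j * g (k - j))) \<le> f j * C"
      by (simp add: sum_distrib_left algebra_simps)
  qed
  also have "\<dots> = infsum f UNIV * C" by (rule infsum_cmult_left') 
  finally show ?thesis unfolding C_def .
qed




lemma cs2: fixes a b c d :: real shows "a*b + c*d \<le> sqrt (a^2+c^2) * sqrt (b^2+d^2)"
proof -
  have "(a*b + c*d)^2 \<le> (a^2+c^2) * (b^2+d^2)"
  proof -
    have "0 \<le> (a*d - b*c)^2" by simp
    then show ?thesis by (simp add: power2_eq_square algebra_simps)
  qed
  then show ?thesis by (metis real_le_rsqrt real_sqrt_mult)
qed

lemma lam_nonneg: "lam L k \<ge> 0" unfolding lam_def by simp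

lemma lam_neg: "lam L (-a, -b) = lam L (a, b)" unfolding lam_def by simp

definition mu :: "real \<Rightarrow> int \<times> int \<Rightarrow> real" where "mu L k = sqrt (lam L k)"

definition vec :: "int \<times> int \<Rightarrow> real \<times> real" where
  "vec k = (real_of_int (fst k), real_of_int (snd k))"

lemma mu_vec: assumes "L > 0" shows "mu L k = 2 * pi / L * norm (vec k)"
proof -
  have "mu L k = sqrt ((2 * pi / L)^2) * sqrt (real_of_int (fst k)^2 + real_of_int (snd k)^2)"
    unfolding mu_def lam_def by (simp add: real_sqrt_mult)
  also have "sqrt ((2 * pi / L)^2) = 2 * pi / L" using assms by simp
  finally show ?thesis unfolding vec_def by (simp add: norm_Pair)
qed

lemma mu_nonneg: "mu L k \<ge> 0" unfolding mu_def by (simp add: lam_nonneg)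

lemma mu_tri: assumes "L > 0" shows "mu L k \<le> mu L j + mu L (k - j)"
proof -
  have "vec k = vec j + vec (k - j)" unfolding vec_def by (simp add: prod_eq_iff)
  then have "norm (vec k) \<le> norm (vec j) + norm (vec (k - j))" by (metis norm_triangle_ineq)
  moreover have "2 * pi / L \<ge> 0" using assms by simp
  ultimately show ?thesis unfolding mu_vec[OF assms] by (metis distrib_left mult_left_mono)
qed

lemma norm_Apow: "norm (Apow L s c k) = lam L k powr s * norm (c k)"
  unfolding Apow_def by simp

lemma lam_powr_mu: assumes "n > 0" shows "lam L k powr (real n / 2) = mu L k ^ n"
proof (cases "lam L k = 0")
  case True then show ?thesis using assms unfolding mu_def by simp
next
  case False
  then have p: "lam L k > 0" using lam_nonneg[of L k] by simp
  have "mu L k ^ n = (lam L k powr (1/2)) ^ n" unfolding mu_def using p by (simp add: powr_half_sqrt)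
  also have "\<dots> = (lam L k powr (1/2)) powr (real n)" using p by (simp add: powr_realpow)
  also have "\<dots> = lam L k powr (real n / 2)" by (simp add: powr_powr)
  finally show ?thesis by simp
qed

lemma lam_powr_half: "lam L k powr (1/2) = mu L k"
  using lam_powr_mu[of 1 L k] by simp

lemma cmod_sub_sq: "(cmod (x - p * complex_of_real r))^2 = (Re x - Re p * r)^2 + (Im x - Im p * r)^2"
  by (simp add: cmod_power2)

lemma leray_norm: "norm (leray f k) \<le> norm (f k)"
proof (cases "k = (0,0)")
  case True then show ?thesis by (simp add: leray_def)
next
  case False
  obtain a b where k: "k = (a, b)" by (cases k)
  obtain x y where f: "f k = (x, y)" by (cases "f k")
  define n where "n = real_of_int a ^ 2 + real_of_int b ^ 2"
  have n0: "n > 0" using False k unfolding n_def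
    by (auto simp: add_pos_nonneg sum_power2_gt_zero_iff)
  define ra where "ra = real_of_int a"
  define rb where "rb = real_of_int b"
  define p where "p = (of_int a * x + of_int b * y) / of_int (a^2 + b^2)"
  have p': "p = (of_real a * x + of_real b * y) / of_real n" unfolding p_def n_def by simp
  have lk: "leray f k = (x - p * of_int a, y - p * of_int b)"
  proof -
    have f': "f (a, b) = (x, y)" using f k by simp
    show ?thesis using False unfolding leray_def k using False k by (auto simp add: Let_def p_def f')
  qed
  have key: "(p1 - (ra * p1 + rb * q1) / n * ra)^2 + (q1 - (ra * p1 + rb * q1) / n * rb)^2 \<le> p1^2 + q1^2" for p1 q1 :: real
  proof -
    define m where "m = ra * p1 + rb * q1"
    define t where "t = m / n"
    have nn: "n = ra^2 + rb^2" unfolding n_def ra_def rb_def by simp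
    have tn: "t * n = m" unfolding t_def using n0 by simp
    have "(p1 - t * ra)^2 + (q1 - t * rb)^2 = p1^2 + q1^2 - 2 * t * m + t * (t * n)"
      unfolding nn m_def by (simp add: power2_eq_square algebra_simps)
    also have "\<dots> = p1^2 + q1^2 - t * m" using tn by simp
    also have "t * m = m^2 / n" unfolding t_def by (simp add: power2_eq_square)
    finally have "(p1 - t * ra)^2 + (q1 - t * rb)^2 = p1^2 + q1^2 - m^2 / n" .
    moreover have "m^2 / n \<ge> 0" using n0 by simp
    ultimately show ?thesis unfolding t_def m_def by linarith
  qed
  have Re: "Re p = (ra * Re x + rb * Re y) / n" and Im: "Im p = (ra * Im x + rb * Im y) / n"
    unfolding p' ra_def rb_def by (simp_all add: Re_divide_of_real Im_divide_of_real)
  have "(norm (leray f k))^2 = (cmod (x - p * of_int a))^2 + (cmod (y - p * of_int b))^2"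
    unfolding lk by (simp add: norm_Pair)
  also have "\<dots> = (Re x - Re p * ra)^2 + (Re y - Re p * rb)^2 + ((Im x - Im p * ra)^2 + (Im y - Im p * rb)^2)"
  proof -
    have ia: "(of_int a :: complex) = complex_of_real ra" unfolding ra_def by simp
    have ib: "(of_int b :: complex) = complex_of_real rb" unfolding rb_def by simp
    show ?thesis unfolding ia ib cmod_sub_sq by simp
  qed
  also have "\<dots> \<le> ((Re x)^2 + (Re y)^2) + ((Im x)^2 + (Im y)^2)"
    unfolding Re Im by (intro add_mono key)
  also have "\<dots> = (norm (f k))^2" unfolding f by (simp add: norm_Pair cmod_power2)
  finally have "(norm (leray f k))^2 \<le> (norm (f k))^2" .
  then show ?thesis by (rule power2_le_imp_le) simp
qed

lemma inner_bound: "cmod (a1 * cnj b1 + a2 * cnj b2) \<le> norm (a1, a2) * norm (b1, b2)"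
proof -
  have "cmod (a1 * cnj b1 + a2 * cnj b2) \<le> cmod a1 * cmod b1 + cmod a2 * cmod b2"
  proof -
    have "cmod (a1 * cnj b1 + a2 * cnj b2) \<le> cmod (a1 * cnj b1) + cmod (a2 * cnj b2)"
      by (rule norm_triangle_ineq)
    also have "\<dots> = cmod a1 * cmod b1 + cmod a2 * cmod b2" by (simp add: norm_mult)
    finally show ?thesis .
  qed
  also have "\<dots> \<le> sqrt ((cmod a1)^2 + (cmod a2)^2) * sqrt ((cmod b1)^2 + (cmod b2)^2)" by (rule cs2)
  finally show ?thesis by (simp add: norm_Pair)
qed




lemma powr_le_1_plus: fixes x :: real assumes "x \<ge> 0" "0 \<le> a" "a \<le> b"
  shows "x powr a \<le> 1 + x powr b"
proof (cases "x \<le> 1")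
  case True then have "x powr a \<le> 1" using assms by (intro powr_le1) auto
  then show ?thesis using powr_ge_zero[of x b] by linarith
next
  case False then have "x powr a \<le> x powr b" using assms by (intro powr_mono) auto
  then show ?thesis by linarith
qed

lemma sq_sum_lower:
  assumes "sq_summable c" "sq_summable (Apow L b c)" "0 \<le> a" "a \<le> b"
  shows "sq_summable (Apow L a c)"
proof -
  have s1: "(\<lambda>k. (norm (c k))^2) summable_on UNIV" using assms(1) unfolding sq_summable_def .
  have s2: "(\<lambda>k. (norm (Apow L b c k))^2) summable_on UNIV" using assms(2) unfolding sq_summable_def .
  have "(\<lambda>k. 2 * (norm (c k))^2 + 2 * (norm (Apow L b c k))^2) summable_on UNIV"
    by (intro summable_on_add summable_on_cmult_right s1 s2)
  then show ?thesis unfolding sq_summable_def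
  proof (rule summable_on_comparison_test)
    fix k
    have "lam L k powr a \<le> 1 + lam L k powr b" by (rule powr_le_1_plus) (use assms lam_nonneg in auto)
    then have "norm (Apow L a c k) \<le> norm (c k) + norm (Apow L b c k)"
    proof -
      have "lam L k powr a * norm (c k) \<le> (1 + lam L k powr b) * norm (c k)"
        by (rule mult_right_mono) (use \<open>lam L k powr a \<le> _\<close> in auto)
      then show ?thesis unfolding norm_Apow by (simp add: algebra_simps)
    qed
    then have "(norm (Apow L a c k))^2 \<le> (norm (c k) + norm (Apow L b c k))^2"
      by (simp add: power_mono)
    also have "\<dots> \<le> 2 * (norm (c k))^2 + 2 * (norm (Apow L b c k))^2"
    proof -
      have "0 \<le> (norm (c k) - norm (Apow L b c k))^2" by simp
      then show ?thesis by (simp add: power2_eq_square algebra_simps)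
    qed
    finally show "(norm (Apow L a c k))^2 \<le> 2 * (norm (c k))^2 + 2 * (norm (Apow L b c k))^2" .
  qed simp
qed

lemma rv_Apow: assumes "real_valued c" shows "real_valued (Apow L s c)"
  unfolding real_valued_def
proof (intro allI)
  fix a b
  obtain p q where pq: "c (a, b) = (p, q)" by (cases "c (a, b)")
  have m: "c (-a, -b) = (cnj p, cnj q)" using assms pq unfolding real_valued_def by simp
  show "Apow L s c (- a, - b) = (cnj (fst (Apow L s c (a, b))), cnj (snd (Apow L s c (a, b))))"
    unfolding Apow_def lam_neg m pq by (simp add: complex_cnj_scaleR)
qed

lemma Apow_zero: assumes "c (0,0) = (0,0)" shows "Apow L s c (0,0) = (0,0)"
  using assms unfolding Apow_def by simp

lemma Apow_Apow: "Apow L 1 (Apow L (1/2) v) = Apow L (3/2) v"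
proof -
  have "lam L k powr 1 * lam L k powr (1/2) = lam L k powr (3/2)" for k
    using powr_add[of "lam L k" 1 "1/2"] by simp
  then show ?thesis unfolding Apow_def by (simp add: fun_eq_iff)
qed

lemma hnorm_mono:
  assumes "sq_summable c" "\<And>k. norm (d k) \<le> norm (c k)"
  shows "sq_summable d \<and> hnorm L d \<le> hnorm L c"
proof -
  have s1: "(\<lambda>k. (norm (c k))^2) summable_on UNIV" using assms(1) unfolding sq_summable_def .
  have le: "(norm (d k))^2 \<le> (norm (c k))^2" for k using assms(2)[of k] by (simp add: power_mono)
  have s2: "(\<lambda>k. (norm (d k))^2) summable_on UNIV"
    by (rule summable_on_comparison_test[OF s1 le]) simp
  have "infsum (\<lambda>k. (norm (d k))^2) UNIV \<le> infsum (\<lambda>k. (norm (c k))^2) UNIV"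
    by (rule infsum_mono[OF s2 s1 le])
  then show ?thesis using s2 unfolding sq_summable_def hnorm_def
    by (simp add: mult_left_mono)
qed

lemma hnorm_nonneg: "hnorm L c \<ge> 0" unfolding hnorm_def by (simp add: infsum_nonneg)

definition negk :: "int \<times> int \<Rightarrow> int \<times> int" where "negk k = (- fst k, - snd k)"

lemma norm_fst_le': "norm (fst x) \<le> norm (x :: 'a::real_normed_vector \<times> 'b::real_normed_vector)"
proof -
  have "norm (fst x) = sqrt ((norm (fst x))^2)" by simp
  also have "\<dots> \<le> sqrt ((norm (fst x))^2 + (norm (snd x))^2)" by (rule real_sqrt_le_mono) simp
  also have "\<dots> = norm x" by (simp add: norm_prod_def)
  finally show ?thesis .
qed

lemma agmon_l1:
  assumes ag: "agmon_const L cA" and c0: "c (0,0) = (0,0)" and rv: "real_valued c"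
    and s1: "sq_summable c" and s2: "sq_summable (Apow L 1 c)"
  shows "(\<lambda>k. norm (c k)) summable_on UNIV \<and>
     infsum (\<lambda>k. norm (c k)) UNIV \<le> cA * sqrt (hnorm L c) * sqrt (hnorm L (Apow L 1 c))"
proof -
  have nneg: "norm (c (-a, -b)) = norm (c (a, b))" for a b
  proof -
    obtain p q where pq: "c (a, b) = (p, q)" by (cases "c (a, b)")
    have "c (-a, -b) = (cnj p, cnj q)" using rv pq unfolding real_valued_def by simp
    then show ?thesis using pq by (simp add: norm_Pair)
  qed
  have fin: "\<exists>X Y. 0 \<le> X \<and> X \<le> hnorm L c \<and> 0 \<le> Y \<and> Y \<le> hnorm L (Apow L 1 c) \<and>
      sum (\<lambda>k. norm (c k)) F \<le> cA * sqrt X * sqrt Y"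
    if F: "finite F" for F
  proof -
    define S where "S = F \<union> negk ` F"
    have fS: "finite S" unfolding S_def using F by simp
    have memS: "(-a, -b) \<in> S \<longleftrightarrow> (a, b) \<in> S" for a b
    proof -
      have nn: "negk (negk x) = x" for x unfolding negk_def by simp
      have inv: "x \<in> negk ` F \<longleftrightarrow> negk x \<in> F" for x
      proof
        assume "x \<in> negk ` F" then show "negk x \<in> F" using nn by auto
      next
        assume "negk x \<in> F" then have "negk (negk x) \<in> negk ` F" by (rule imageI)
        then show "x \<in> negk ` F" using nn by simp
      qed
      have e: "(-a, -b) = negk (a, b)" unfolding negk_def by simp
      show ?thesis unfolding S_def e Un_iff inv nn by blast
    qed
    define d :: coef where "d k = (if k \<in> S then (complex_of_real (norm (c k)), 0) else (0, 0))" for k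
    have dn: "norm (d k) \<le> norm (c k)" for k unfolding d_def by (simp add: norm_Pair)
    have hd: "sq_summable d \<and> hnorm L d \<le> hnorm L c" by (rule hnorm_mono[OF s1 dn])
    have dna: "norm (Apow L 1 d k) \<le> norm (Apow L 1 c k)" for k
      unfolding norm_Apow using dn[of k] lam_nonneg[of L k] by (simp add: mult_left_mono)
    have hAd: "sq_summable (Apow L 1 d) \<and> hnorm L (Apow L 1 d) \<le> hnorm L (Apow L 1 c)"
      by (rule hnorm_mono[OF s2 dna])
    have d0: "d (0,0) = (0,0)" unfolding d_def using c0 by simp
    have drv: "real_valued d" unfolding real_valued_def d_def by (simp add: memS nneg)
    have A: "norm (feval L d (0,0)) \<le> cA * sqrt (hnorm L d) * sqrt (hnorm L (Apow L 1 d))"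
      using ag d0 drv hd hAd unfolding agmon_const_def by blast
    have fe: "fst (feval L d (0,0)) = complex_of_real (sum (\<lambda>k. norm (c k)) S)"
    proof -
      have "fst (feval L d (0,0)) = infsum (\<lambda>k. fst (d k)) UNIV"
        unfolding feval_def ef_def by simp
      also have "\<dots> = infsum (\<lambda>k. fst (d k)) S"
        by (rule infsum_cong_neutral) (auto simp: d_def)
      also have "\<dots> = sum (\<lambda>k. fst (d k)) S" using fS by simp
      also have "\<dots> = sum (\<lambda>k. complex_of_real (norm (c k))) S" by (rule sum.cong) (auto simp: d_def)
      finally show ?thesis by simp
    qed
    have B: "sum (\<lambda>k. norm (c k)) S \<le> norm (feval L d (0,0))"
    proof -
      have "norm (fst (feval L d (0,0))) \<le> norm (feval L d (0,0))" by (rule norm_fst_le')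
      moreover have "norm (fst (feval L d (0,0))) = sum (\<lambda>k. norm (c k)) S"
        unfolding fe norm_of_real by (simp add: sum_nonneg)
      ultimately show ?thesis by simp
    qed
    have C: "sum (\<lambda>k. norm (c k)) F \<le> sum (\<lambda>k. norm (c k)) S"
      by (rule sum_mono2[OF fS]) (simp_all add: S_def)
    show ?thesis
      apply (rule exI[of _ "hnorm L d"], rule exI[of _ "hnorm L (Apow L 1 d)"])
      using hd hAd A B C by (simp add: hnorm_nonneg)
  qed
  show ?thesis
  proof (cases "cA \<ge> 0")
    case True
    have fin': "sum (\<lambda>k. norm (c k)) F \<le> cA * sqrt (hnorm L c) * sqrt (hnorm L (Apow L 1 c))"
      if FF: "finite F" for F
    proof -
      obtain X Y where XY: "0 \<le> X" "X \<le> hnorm L c" "0 \<le> Y" "Y \<le> hnorm L (Apow L 1 c)"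
        "sum (\<lambda>k. norm (c k)) F \<le> cA * sqrt X * sqrt Y" using fin[OF FF] by blast
      have "cA * sqrt X * sqrt Y \<le> cA * sqrt (hnorm L c) * sqrt (hnorm L (Apow L 1 c))"
        by (intro mult_mono mult_left_mono real_sqrt_le_mono) (use XY True in auto)
      then show ?thesis using XY(5) by linarith
    qed
    have bd: "bdd_above (sum (\<lambda>k. norm (c k)) ` {F. F \<subseteq> UNIV \<and> finite F})"
    proof (rule bdd_aboveI)
      fix x assume "x \<in> sum (\<lambda>k. norm (c k)) ` {F. F \<subseteq> UNIV \<and> finite F}"
      then obtain F where "finite F" "x = sum (\<lambda>k. norm (c k)) F" by blast
      then show "x \<le> cA * sqrt (hnorm L c) * sqrt (hnorm L (Apow L 1 c))" using fin' by simp
    qed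
    have sm: "(\<lambda>k. norm (c k)) summable_on UNIV" by (rule nonneg_bdd_above_summable_on[OF _ bd]) simp
    have "infsum (\<lambda>k. norm (c k)) UNIV \<le> cA * sqrt (hnorm L c) * sqrt (hnorm L (Apow L 1 c))"
      by (rule infsum_le_finite_sums[OF sm]) (rule fin')
    then show ?thesis using sm by simp
  next
    case False
    have ck: "c k = 0" for k
    proof -
      obtain X Y where XY: "0 \<le> X" "0 \<le> Y" "sum (\<lambda>k. norm (c k)) {k} \<le> cA * sqrt X * sqrt Y"
        using fin[of "{k}"] by auto
      have "cA * sqrt X * sqrt Y \<le> 0" using False XY
        by (simp add: mult_nonpos_nonneg)
      moreover have "sum (\<lambda>k. norm (c k)) {k} = norm (c k)" by simp
      ultimately have "norm (c k) \<le> 0" using XY(3) by linarith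
      then show ?thesis by simp
    qed
    have h0: "hnorm L c = 0" unfolding hnorm_def by (simp add: ck)
    show ?thesis using ck h0 by simp
  qed
qed




definition sj :: "real \<Rightarrow> coef \<Rightarrow> int \<times> int \<Rightarrow> int \<times> int \<Rightarrow> complex" where
  "sj L u k j = fst (u j) * (2 * pi * \<i> * of_int (fst k - fst j) / L)
                + snd (u j) * (2 * pi * \<i> * of_int (snd k - snd j) / L)"

lemma advect_eq: "advect L u v k =
   (infsum (\<lambda>j. sj L u k j * fst (v (k - j))) UNIV, infsum (\<lambda>j. sj L u k j * snd (v (k - j))) UNIV)"
proof -
  have e: "k - j = (fst k - fst j, snd k - snd j)" for j by (simp add: prod_eq_iff)
  show ?thesis unfolding advect_def Let_def sj_def e by (simp only: fst_conv snd_conv)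
qed

lemma sj_bound: assumes "L > 0" shows "cmod (sj L u k j) \<le> norm (u j) * mu L (k - j)"
proof -
  define l1 where "l1 = fst k - fst j"
  define l2 where "l2 = snd k - snd j"
  define c where "c = 2 * pi * \<i> / L"
  have cm: "cmod c = 2 * pi / L" unfolding c_def using assms by (simp add: norm_divide norm_mult)
  have s0: "sj L u k j = fst (u j) * (2 * pi * \<i> * of_int l1 / L) + snd (u j) * (2 * pi * \<i> * of_int l2 / L)"
    unfolding sj_def l1_def l2_def by (rule refl)
  have c1: "2 * pi * \<i> * of_int l1 / L = c * of_int l1" unfolding c_def by simp
  have c2: "2 * pi * \<i> * of_int l2 / L = c * of_int l2" unfolding c_def by simp
  have "sj L u k j = c * (fst (u j) * of_int l1 + snd (u j) * of_int l2)"
    unfolding s0 c1 c2 by (simp add: algebra_simps)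
  then have "cmod (sj L u k j) = (2 * pi / L) * cmod (fst (u j) * of_int l1 + snd (u j) * of_int l2)"
    by (simp add: norm_mult cm)
  also have "\<dots> \<le> (2 * pi / L) * (cmod (fst (u j)) * \<bar>real_of_int l1\<bar> + cmod (snd (u j)) * \<bar>real_of_int l2\<bar>)"
  proof (rule mult_left_mono)
    have "cmod (fst (u j) * of_int l1 + snd (u j) * of_int l2) \<le> cmod (fst (u j) * of_int l1) + cmod (snd (u j) * of_int l2)"
      by (rule norm_triangle_ineq)
    also have "\<dots> = cmod (fst (u j)) * \<bar>real_of_int l1\<bar> + cmod (snd (u j)) * \<bar>real_of_int l2\<bar>"
      by (simp add: norm_mult)
    finally show "cmod (fst (u j) * of_int l1 + snd (u j) * of_int l2) \<le> cmod (fst (u j)) * \<bar>real_of_int l1\<bar> + cmod (snd (u j)) * \<bar>real_of_int l2\<bar>" .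
  qed (use assms in simp)
  also have "\<dots> \<le> (2 * pi / L) * (sqrt ((cmod (fst (u j)))^2 + (cmod (snd (u j)))^2) * sqrt (\<bar>real_of_int l1\<bar>^2 + \<bar>real_of_int l2\<bar>^2))"
    by (rule mult_left_mono[OF cs2]) (use assms in simp)
  also have "\<dots> = norm (u j) * mu L (k - j)"
    unfolding mu_vec[OF assms] vec_def l1_def l2_def by (simp add: norm_Pair norm_prod_def)
  finally show ?thesis .
qed

lemma norm_pair_mult: "norm (z * a, z * b) = cmod z * norm (a, b)"
proof -
  have "norm (z * a, z * b) = sqrt ((cmod z)^2 * ((cmod a)^2 + (cmod b)^2))"
    by (simp add: norm_Pair norm_mult power_mult_distrib distrib_left)
  also have "\<dots> = cmod z * norm (a, b)" by (simp add: real_sqrt_mult norm_Pair)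
  finally show ?thesis .
qed

lemma advect_bound:
  assumes L: "L > 0"
    and sm: "(\<lambda>j. norm (u j) * norm (Apow L (1/2) v (k - j))) summable_on UNIV"
  shows "norm (advect L u v k) \<le> infsum (\<lambda>j. norm (u j) * norm (Apow L (1/2) v (k - j))) UNIV"
proof -
  define g where "g j = norm (u j) * norm (Apow L (1/2) v (k - j))" for j
  define t where "t j = (sj L u k j * fst (v (k - j)), sj L u k j * snd (v (k - j)))" for j
  have tb: "norm (t j) \<le> g j" for j
  proof -
    have "norm (t j) = cmod (sj L u k j) * norm (v (k - j))"
      unfolding t_def norm_pair_mult by simp
    also have "\<dots> \<le> norm (u j) * mu L (k - j) * norm (v (k - j))"
      by (rule mult_right_mono[OF sj_bound[OF L]]) simp
    also have "\<dots> = g j" unfolding g_def norm_Apow lam_powr_half by simp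
    finally show ?thesis .
  qed
  have gs: "g summable_on UNIV" using sm unfolding g_def .
  have tas: "(\<lambda>j. norm (t j)) summable_on UNIV"
    by (rule summable_on_comparison_test[OF gs]) (use tb in auto)
  have ts: "t summable_on UNIV" by (rule abs_summable_summable[OF tas])
  define S where "S = infsum t UNIV"
  have hs: "(t has_sum S) UNIV" unfolding S_def using ts by (rule has_sum_infsum)
  have h1: "((\<lambda>j. fst (t j)) has_sum fst S) UNIV" by (rule has_sum_bounded_linear[OF bounded_linear_fst hs])
  have h2: "((\<lambda>j. snd (t j)) has_sum snd S) UNIV" by (rule has_sum_bounded_linear[OF bounded_linear_snd hs])
  have "advect L u v k = (fst S, snd S)"
    unfolding advect_eq using infsumI[OF h1] infsumI[OF h2] by (simp add: t_def)
  then have "advect L u v k = S" by simp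
  moreover have "norm S \<le> infsum g UNIV"
    by (rule norm_infsum_le[OF hs has_sum_infsum[OF gs]]) (rule tb)
  ultimately show ?thesis unfolding g_def by simp
qed

lemma pow_split: fixes x a b :: real
  assumes "0 \<le> a" "0 \<le> b" "0 \<le> x" "x \<le> a + b"
  shows "x ^ n \<le> 2 ^ n * (a ^ n + b ^ n)"
proof -
  have "x ^ n \<le> (a + b) ^ n" using assms by (simp add: power_mono)
  also have "\<dots> \<le> (2 * max a b) ^ n" using assms by (intro power_mono) auto
  also have "\<dots> = 2 ^ n * (max a b) ^ n" by (simp add: power_mult_distrib)
  also have "(max a b) ^ n \<le> a ^ n + b ^ n" using assms by (cases "a \<le> b") (auto simp: max_def)
  finally show ?thesis by simp
qed




lemma hnorm_eq: assumes "L > 0" shows "hnorm L c = L * sqrt (infsum (\<lambda>k. (norm (c k))^2) UNIV)"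
  unfolding hnorm_def using assms by (simp add: real_sqrt_mult)

theorem lemma5p1:
  fixes L cA :: real and \<alpha> :: nat and u v w :: coef
  assumes "L > 0" and "\<alpha> > 3" and "agmon_const L cA"
    and "inDom L (real \<alpha> / 2) u"
    and "inDom L ((real \<alpha> + 1) / 2) v"
    and "inDom L (real \<alpha>) w"
  shows "cmod (l2inner L (Bop L u v) (Apow L (real \<alpha>) w))
    \<le> 2 ^ \<alpha> * cA *
       (sqrt (hnorm L u) * sqrt (hnorm L (Apow L 1 u)) * hnorm L (Apow L ((1 + real \<alpha>) / 2) v)
        + hnorm L (Apow L (real \<alpha> / 2) u) * sqrt (hnorm L (Apow L (1 / 2) v))
            * sqrt (hnorm L (Apow L (3 / 2) v)))
       * hnorm L (Apow L (real \<alpha> / 2) w)"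
proof -
  have L: "L > 0" by fact
  have a4: "real \<alpha> \<ge> 4" using assms(2) by simp
  have apos: "\<alpha> > 0" using assms(2) by simp
  have uH: "inH u" and uP: "sq_summable (Apow L (real \<alpha> / 2) u)" using assms(4) unfolding inDom_def by auto
  have u0: "u (0,0) = (0,0)" and urv: "real_valued u" and us: "sq_summable u" using uH unfolding inH_def by auto
  have vH: "inH v" and vR0: "sq_summable (Apow L ((real \<alpha> + 1) / 2) v)" using assms(5) unfolding inDom_def by auto
  have v0: "v (0,0) = (0,0)" and vrv: "real_valued v" and vs: "sq_summable v" using vH unfolding inH_def by auto
  have wH: "inH w" and wA: "sq_summable (Apow L (real \<alpha>) w)" using assms(6) unfolding inDom_def by auto
  have ws: "sq_summable w" using wH unfolding inH_def by auto
  have vR: "sq_summable (Apow L ((1 + real \<alpha>) / 2) v)" using vR0 by (simp add: add.commute)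
  have uA1: "sq_summable (Apow L 1 u)" by (rule sq_sum_lower[OF us uP]) (use a4 in auto)
  have vh: "sq_summable (Apow L (1/2) v)" by (rule sq_sum_lower[OF vs vR]) (use a4 in auto)
  have v32: "sq_summable (Apow L (3/2) v)" by (rule sq_sum_lower[OF vs vR]) (use a4 in auto)
  have wW: "sq_summable (Apow L (real \<alpha> / 2) w)" by (rule sq_sum_lower[OF ws wA]) (use a4 in auto)
  have agu: "(\<lambda>k. norm (u k)) summable_on UNIV \<and>
     infsum (\<lambda>k. norm (u k)) UNIV \<le> cA * sqrt (hnorm L u) * sqrt (hnorm L (Apow L 1 u))"
    by (rule agmon_l1[OF assms(3) u0 urv us uA1])
  have v1h: "sq_summable (Apow L 1 (Apow L (1/2) v))" unfolding Apow_Apow by (rule v32)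
  have agv: "(\<lambda>k. norm (Apow L (1/2) v k)) summable_on UNIV \<and>
     infsum (\<lambda>k. norm (Apow L (1/2) v k)) UNIV \<le> cA * sqrt (hnorm L (Apow L (1/2) v)) * sqrt (hnorm L (Apow L (3/2) v))"
    using agmon_l1[OF assms(3) Apow_zero[of v L "1/2", OF v0] rv_Apow[of v L "1/2", OF vrv] vh v1h] unfolding Apow_Apow .
  define U where "U = (\<lambda>k. norm (u k))"
  define Q where "Q = (\<lambda>k. norm (Apow L (1/2) v k))"
  define P where "P = (\<lambda>k. norm (Apow L (real \<alpha> / 2) u k))"
  define R where "R = (\<lambda>k. norm (Apow L ((1 + real \<alpha>) / 2) v k))"
  define W where "W = (\<lambda>k. norm (Apow L (real \<alpha> / 2) w k))"
  define Aw where "Aw = Apow L (real \<alpha>) w"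
  have U0: "U k \<ge> 0" and Q0: "Q k \<ge> 0" and P0: "P k \<ge> 0" and R0: "R k \<ge> 0" and W0: "W k \<ge> 0" for k
    unfolding U_def Q_def P_def R_def W_def by auto
  have Us: "U summable_on UNIV" unfolding U_def using agu by (rule conjunct1)
  have Qs: "Q summable_on UNIV" unfolding Q_def using agv by (rule conjunct1)
  have P2: "(\<lambda>k. (P k)^2) summable_on UNIV" using uP unfolding sq_summable_def P_def .
  have R2: "(\<lambda>k. (R k)^2) summable_on UNIV" using vR unfolding sq_summable_def R_def .
  have W2: "(\<lambda>k. (W k)^2) summable_on UNIV" using wW unfolding sq_summable_def W_def .
  have Pb: "P k \<le> sqrt (infsum (\<lambda>k. (P k)^2) UNIV)" for k by (rule l2_pointwise[OF P2 P0])
  have Rb: "R k \<le> sqrt (infsum (\<lambda>k. (R k)^2) UNIV)" for k by (rule l2_pointwise[OF R2 R0])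
  have Qb: "Q k \<le> infsum Q UNIV" for k by (rule single_le_infsum[OF Qs Q0])
  have PU: "P k = mu L k ^ \<alpha> * U k" for k
    unfolding P_def U_def norm_Apow lam_powr_mu[OF apos] ..
  have RQ: "R k = mu L k ^ \<alpha> * Q k" for k
  proof -
    have e: "(1 + real \<alpha>) / 2 = real (\<alpha> + 1) / 2" by simp
    have "R k = mu L k ^ (\<alpha> + 1) * norm (v k)"
    proof -
      have p1: "\<alpha> + 1 > 0" by simp
      show ?thesis unfolding R_def norm_Apow e lam_powr_mu[OF p1] by simp
    qed
    then show ?thesis unfolding Q_def norm_Apow lam_powr_half by simp
  qed
  have AwW: "norm (Aw k) = mu L k ^ \<alpha> * W k" for k
  proof -
    have e: "real \<alpha> = real (2 * \<alpha>) / 2" by simp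
    have "norm (Aw k) = mu L k ^ (2 * \<alpha>) * norm (w k)"
      unfolding Aw_def norm_Apow by (subst e) (rule arg_cong[where f="\<lambda>x. x * _"], rule lam_powr_mu, use apos in simp)
    then show ?thesis unfolding W_def norm_Apow lam_powr_mu[OF apos] by (simp add: power_add mult_2)
  qed
  define G where "G k = infsum (\<lambda>j. U j * Q (k - j)) UNIV" for k
  define I1 where "I1 k = infsum (\<lambda>j. P j * Q (k - j)) UNIV" for k
  define I2 where "I2 k = infsum (\<lambda>j. U j * R (k - j)) UNIV" for k
  have Gs: "(\<lambda>j. U j * Q (k - j)) summable_on UNIV" for k by (rule conv_summable[OF Us U0 Q0 Qb])
  have I1s: "(\<lambda>j. P j * Q (k - j)) summable_on UNIV" for k by (rule conv_summable2[OF Qs P0 Q0 Pb])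
  have I2s: "(\<lambda>j. U j * R (k - j)) summable_on UNIV" for k by (rule conv_summable[OF Us U0 R0 Rb])
  have BG: "norm (Bop L u v k) \<le> G k" for k
  proof -
    have "norm (Bop L u v k) \<le> norm (advect L u v k)" unfolding Bop_def by (rule leray_norm)
    also have "\<dots> \<le> G k" unfolding G_def U_def Q_def
      by (rule advect_bound[OF L]) (use Gs[of k] in \<open>simp add: U_def Q_def\<close>)
    finally show ?thesis .
  qed
  have key: "mu L k ^ \<alpha> * G k \<le> 2 ^ \<alpha> * (I1 k + I2 k)" for k
  proof -
    have "mu L k ^ \<alpha> * G k = infsum (\<lambda>j. mu L k ^ \<alpha> * (U j * Q (k - j))) UNIV"
      unfolding G_def by (rule infsum_cmult_right'[symmetric])
    also have "\<dots> \<le> infsum (\<lambda>j. 2 ^ \<alpha> * (P j * Q (k - j) + U j * R (k - j))) UNIV"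
    proof (rule infsum_mono)
      show "(\<lambda>j. mu L k ^ \<alpha> * (U j * Q (k - j))) summable_on UNIV"
        by (rule summable_on_cmult_right[OF Gs])
      show "(\<lambda>j. 2 ^ \<alpha> * (P j * Q (k - j) + U j * R (k - j))) summable_on UNIV"
        by (rule summable_on_cmult_right[OF summable_on_add[OF I1s I2s]])
      fix j
      have m: "mu L k ^ \<alpha> \<le> 2 ^ \<alpha> * (mu L j ^ \<alpha> + mu L (k - j) ^ \<alpha>)"
        by (rule pow_split) (use mu_nonneg mu_tri[OF L] in auto)
      have "mu L k ^ \<alpha> * (U j * Q (k - j)) \<le> 2 ^ \<alpha> * (mu L j ^ \<alpha> + mu L (k - j) ^ \<alpha>) * (U j * Q (k - j))"
        by (rule mult_right_mono[OF m]) (simp add: U0 Q0)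
      also have "\<dots> = 2 ^ \<alpha> * (P j * Q (k - j) + U j * R (k - j))"
        unfolding PU RQ by (simp add: algebra_simps)
      finally show "mu L k ^ \<alpha> * (U j * Q (k - j)) \<le> 2 ^ \<alpha> * (P j * Q (k - j) + U j * R (k - j))" .
    qed
    also have "\<dots> = 2 ^ \<alpha> * (I1 k + I2 k)"
      unfolding I1_def I2_def by (simp add: infsum_cmult_right' infsum_add[OF I1s I2s])
    finally show ?thesis .
  qed
  define z where "z k = fst (Bop L u v k) * cnj (fst (Aw k)) + snd (Bop L u v k) * cnj (snd (Aw k))" for k
  have zb: "norm (z k) \<le> 2 ^ \<alpha> * (W k * I1 k + W k * I2 k)" for k
  proof -
    have "norm (z k) \<le> norm (fst (Bop L u v k), snd (Bop L u v k)) * norm (fst (Aw k), snd (Aw k))"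
      unfolding z_def by (rule inner_bound)
    also have "\<dots> = norm (Bop L u v k) * norm (Aw k)" by simp
    also have "\<dots> \<le> G k * (mu L k ^ \<alpha> * W k)"
      unfolding AwW by (rule mult_right_mono[OF BG]) (simp add: W0 mu_nonneg)
    also have "\<dots> = (mu L k ^ \<alpha> * G k) * W k" by simp
    also have "\<dots> \<le> 2 ^ \<alpha> * (I1 k + I2 k) * W k" by (rule mult_right_mono[OF key W0])
    finally show ?thesis by (simp add: algebra_simps)
  qed
  define nP where "nP = sqrt (infsum (\<lambda>k. (P k)^2) UNIV)"
  define nR where "nR = sqrt (infsum (\<lambda>k. (R k)^2) UNIV)"
  define nW where "nW = sqrt (infsum (\<lambda>k. (W k)^2) UNIV)"
  define Bnd where "Bnd = 2 ^ \<alpha> * (infsum Q UNIV * (nP * nW) + infsum U UNIV * (nR * nW))"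
  have finb: "sum (\<lambda>k. norm (z k)) K \<le> Bnd" if K: "finite K" for K
  proof -
    have "sum (\<lambda>k. norm (z k)) K \<le> sum (\<lambda>k. 2 ^ \<alpha> * (W k * I1 k + W k * I2 k)) K"
      by (rule sum_mono) (rule zb)
    also have "\<dots> = 2 ^ \<alpha> * (sum (\<lambda>k. W k * I1 k) K + sum (\<lambda>k. W k * I2 k) K)"
      by (simp only: sum.distrib[symmetric] sum_distrib_left)
    also have "\<dots> \<le> Bnd" unfolding Bnd_def
    proof (intro mult_left_mono add_mono)
      have "sum (\<lambda>k. W k * I1 k) K = (\<Sum>k\<in>K. W k * infsum (\<lambda>j. Q j * P (k - j)) UNIV)"
        unfolding I1_def by (simp add: conv_swap[of P Q])
      also have "\<dots> \<le> infsum Q UNIV * (nP * nW)" unfolding nP_def nW_def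
        by (rule young_fin[OF Qs P2 W2 Q0 P0 W0 K])
      finally show "sum (\<lambda>k. W k * I1 k) K \<le> infsum Q UNIV * (nP * nW)" .
      show "sum (\<lambda>k. W k * I2 k) K \<le> infsum U UNIV * (nR * nW)" unfolding I2_def nR_def nW_def
        by (rule young_fin[OF Us R2 W2 U0 R0 W0 K])
    qed simp
    finally show ?thesis .
  qed
  have bd: "bdd_above (sum (\<lambda>k. norm (z k)) ` {F. F \<subseteq> UNIV \<and> finite F})"
  proof (rule bdd_aboveI)
    fix x assume "x \<in> sum (\<lambda>k. norm (z k)) ` {F. F \<subseteq> UNIV \<and> finite F}"
    then obtain F where "finite F" "x = sum (\<lambda>k. norm (z k)) F" by blast
    then show "x \<le> Bnd" using finb by simp
  qed
  have zs: "(\<lambda>k. norm (z k)) summable_on UNIV" by (rule nonneg_bdd_above_summable_on[OF _ bd]) simp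
  have zi: "infsum (\<lambda>k. norm (z k)) UNIV \<le> Bnd" by (rule infsum_le_finite_sums[OF zs]) (rule finb)
  have zn: "cmod (infsum z UNIV) \<le> infsum (\<lambda>k. norm (z k)) UNIV" by (rule norm_infsum_bound[OF zs])
  have lhs: "cmod (l2inner L (Bop L u v) Aw) = L^2 * cmod (infsum z UNIV)"
    unfolding l2inner_def z_def using L by (simp add: norm_mult norm_power)
  have hP: "hnorm L (Apow L (real \<alpha> / 2) u) = L * nP" unfolding hnorm_eq[OF L] nP_def P_def ..
  have hR: "hnorm L (Apow L ((1 + real \<alpha>) / 2) v) = L * nR" unfolding hnorm_eq[OF L] nR_def R_def ..
  have hW: "hnorm L (Apow L (real \<alpha> / 2) w) = L * nW" unfolding hnorm_eq[OF L] nW_def W_def ..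
  have nP0: "nP \<ge> 0" and nR0: "nR \<ge> 0" and nW0: "nW \<ge> 0" unfolding nP_def nR_def nW_def
    by (auto intro!: infsum_nonneg)
  have AU: "infsum U UNIV \<le> cA * sqrt (hnorm L u) * sqrt (hnorm L (Apow L 1 u))" unfolding U_def using agu by (rule conjunct2)
  have AQ: "infsum Q UNIV \<le> cA * sqrt (hnorm L (Apow L (1/2) v)) * sqrt (hnorm L (Apow L (3/2) v))"
    unfolding Q_def using agv by (rule conjunct2)
  have "cmod (l2inner L (Bop L u v) Aw) \<le> L^2 * Bnd"
    unfolding lhs using zn zi L by (simp add: mult_left_mono)
  also have "L^2 * Bnd = 2 ^ \<alpha> * (infsum Q UNIV * ((L * nP) * (L * nW)) + infsum U UNIV * ((L * nR) * (L * nW)))"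
    unfolding Bnd_def by (simp add: power2_eq_square algebra_simps)
  also have "\<dots> \<le> 2 ^ \<alpha> * ((cA * sqrt (hnorm L (Apow L (1/2) v)) * sqrt (hnorm L (Apow L (3/2) v))) * ((L * nP) * (L * nW))
      + (cA * sqrt (hnorm L u) * sqrt (hnorm L (Apow L 1 u))) * ((L * nR) * (L * nW)))"
    using L nP0 nR0 nW0 by (intro mult_left_mono add_mono mult_right_mono AU AQ) auto
  also have "\<dots> = 2 ^ \<alpha> * cA *
       (sqrt (hnorm L u) * sqrt (hnorm L (Apow L 1 u)) * hnorm L (Apow L ((1 + real \<alpha>) / 2) v)
        + hnorm L (Apow L (real \<alpha> / 2) u) * sqrt (hnorm L (Apow L (1 / 2) v))
            * sqrt (hnorm L (Apow L (3 / 2) v)))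
       * hnorm L (Apow L (real \<alpha> / 2) w)"
    unfolding hP hR hW by (simp add: algebra_simps)
  finally show ?thesis unfolding Aw_def .
qed


end
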